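(* Let $R_s>0$, $\lambda=2^{R_s}$, and let $\gamma_d,\gamma_e$ be independent, where $\gamma_d$ is generalized-$K$ distributed with $k_d=m_d=1$ and mean $\overline\gamma_d>0$ (CDF $F_{\gamma_d}(x)=G_{1,3}^{2,1}\!\left(\frac{x}{\overline\gamma_d}\,\middle|\,{1\atop 1,1,0}\right)$), and $\gamma_e$ is generalized-$K$ distributed with parameters $k_e>0,m_e>0$ and mean $\overline\gamma_e>0$. Let $\sigma_e^2$ be the variance of $\gamma_e$, $P(x)=F_{\gamma_d}(\lambda-1+\lambda x)$, $\widetilde P_{\rm sop}(\overline\gamma_d):=P(\overline\gamma_e)+\frac{\sigma_e^2}{2}P''(\overline\gamma_e)$, and $a=\lambda-1+\lambda\overline\gamma_e$. Then, as $\overline\gamma_d\to\infty$ with all other parameters fixed, $$\widetilde P_{\rm sop}(\overline\gamma_d)=\overline\gamma_d^{-1}\left(\frac{\psi(1)+\psi(2)-\ln\frac{a}{\overline\gamma_d}}{a^{-1}}-\frac{\overline\gamma_e^2\lambda^2\left(\frac{(k_e+1)(m_e+1)}{k_em_e}-1\right)}{2a}\right)+o(\overline\gamma_d^{-1}).$$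
   Context: $\psi$ is the digamma function and $G^{m,n}_{p,q}$ the standard Meijer G-function. The generalized-$K$ distribution with parameters $k,m$ and mean $\overline\gamma$ is that of $\overline\gamma XY$ with $X,Y$ independent unit-mean Gamma variables of shapes $k$ and $m$ (for $k=m=1$ this is the $K$-distribution). $\widetilde P_{\rm sop}$ is the second-order Taylor approximation of the secrecy outage probability $\mathbb{E}\{F_{\gamma_d}(\lambda-1+\lambda\gamma_e)\}$ around the mean of $\gamma_e$. *)

theory Defs
  imports "HOL-Analysis.Analysis" "HOL-Library.Landau_Symbols"
begin

definition gamma_unit_density :: "real \<Rightarrow> real \<Rightarrow> real" where
  "gamma_unit_density k x =
     (if x > 0 then k powr k * x powr (k - 1) * exp (- k * x) / Gamma k else 0)"

text \<open>CDF of the generalized-K distribution with parameters k, m and mean gbar,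
  i.e. of gbar * X * Y with X, Y independent unit-mean Gamma(k), Gamma(m).\<close>
definition genK_cdf :: "real \<Rightarrow> real \<Rightarrow> real \<Rightarrow> real \<Rightarrow> real" where
  "genK_cdf k m gbar x =
     (LINT u|lborel. LINT v|lborel.
        gamma_unit_density k u * gamma_unit_density m v * indicator {..x} (gbar * u * v))"

definition genK_var :: "real \<Rightarrow> real \<Rightarrow> real \<Rightarrow> real" where
  "genK_var k m gbar =
     (LINT u|lborel. LINT v|lborel.
        gamma_unit_density k u * gamma_unit_density m v * (gbar * u * v - gbar)\<^sup>2)"

definition P_sop_approx :: "real \<Rightarrow> real \<Rightarrow> real \<Rightarrow> real \<Rightarrow> real \<Rightarrow> real" where
  "P_sop_approx Rs ke me ge gd =
     (let lam = 2 powr Rs;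
          P = (\<lambda>x. genK_cdf 1 1 gd (lam - 1 + lam * x))
      in P ge + genK_var ke me ge / 2 * deriv (deriv P) ge)"

end

theory Submission
  imports Defs "HOL-Real_Asymp.Real_Asymp"
begin


lemma DERIV_LINT:
  fixes f f' :: "real \<Rightarrow> real \<Rightarrow> real" and w :: "real \<Rightarrow> real"
  assumes ab: "a < x" "x < b"
  assumes int: "\<And>s. a < s \<Longrightarrow> s < b \<Longrightarrow> integrable lborel (f s)"
  assumes der: "\<And>s u. a < s \<Longrightarrow> s < b \<Longrightarrow> ((\<lambda>s. f s u) has_real_derivative f' s u) (at s)"
  assumes bnd: "\<And>s u. a < s \<Longrightarrow> s < b \<Longrightarrow> \<bar>f' s u\<bar> \<le> w u"
  assumes w: "integrable lborel w"
  assumes meas: "f' x \<in> borel_measurable lborel"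
  shows "((\<lambda>s. LINT u|lborel. f s u) has_real_derivative (LINT u|lborel. f' x u)) (at x)"
proof -
  let ?F = "\<lambda>s. LINT u|lborel. f s u"
  have "((\<lambda>y. (?F y - ?F x) / (y - x)) \<longlongrightarrow> (LINT u|lborel. f' x u)) (at x)"
    unfolding tendsto_at_iff_sequentially
  proof (intro allI impI)
    fix X :: "nat \<Rightarrow> real"
    assume X: "\<forall>i. X i \<in> UNIV - {x}" and Xl: "X \<longlonglongrightarrow> x"
    have "eventually (\<lambda>n. X n \<in> {a<..<b}) sequentially"
      using Xl ab by (intro topological_tendstoD) auto
    then obtain N where N: "\<And>n. n \<ge> N \<Longrightarrow> X n \<in> {a<..<b}"
      by (auto simp: eventually_sequentially)
    define Y where "Y n = X (n + N)" for n
    have Y: "a < Y n" "Y n < b" "Y n \<noteq> x" for n using N[of "n+N"] X by (auto simp: Y_def)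
    have Yl: "Y \<longlonglongrightarrow> x" unfolding Y_def using LIMSEQ_ignore_initial_segment[OF Xl] .
    define s where "s n u = (f (Y n) u - f x u) / (Y n - x)" for n u
    have Fs: "(?F (Y n) - ?F x) / (Y n - x) = (LINT u|lborel. s n u)" for n
      unfolding s_def using int[OF Y(1,2)] int[OF ab]
      by (simp add: integral_diff)
    have "(\<lambda>n. LINT u|lborel. s n u) \<longlonglongrightarrow> (LINT u|lborel. f' x u)"
    proof (rule integral_dominated_convergence[where w=w])
      show "f' x \<in> borel_measurable lborel" by fact
      show "integrable lborel w" by fact
      show "s n \<in> borel_measurable lborel" for n
        unfolding s_def using int[OF Y(1,2)] int[OF ab] by measurable
      show "AE u in lborel. (\<lambda>n. s n u) \<longlonglongrightarrow> f' x u"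
      proof (intro AE_I2)
        fix u
        have "((\<lambda>y. (f y u - f x u) / (y - x)) \<longlongrightarrow> f' x u) (at x)"
          using der[OF ab] by (simp add: has_field_derivative_iff)
        then have "((\<lambda>y. (f y u - f x u) / (y - x)) \<circ> Y) \<longlonglongrightarrow> f' x u"
          unfolding tendsto_at_iff_sequentially using Y Yl by auto
        then show "(\<lambda>n. s n u) \<longlonglongrightarrow> f' x u" by (simp add: s_def o_def)
      qed
      show "AE u in lborel. norm (s n u) \<le> w u" for n
      proof (intro AE_I2)
        fix u
        have "\<exists>z. a < z \<and> z < b \<and> f (Y n) u - f x u = (Y n - x) * f' z u"
        proof (cases "Y n < x")
          case True
          have "\<And>s. Y n \<le> s \<Longrightarrow> s \<le> x \<Longrightarrow> ((\<lambda>s. f s u) has_real_derivative f' s u) (at s)"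
            using der Y(1) ab(2) by (meson le_less_trans less_le_trans)
          from MVT2[OF True this] obtain z where
            "Y n < z" "z < x" "f x u - f (Y n) u = (x - Y n) * f' z u" by blast
          then show ?thesis using Y(1,2)[of n] ab by (intro exI[of _ z]) (auto simp: algebra_simps)
        next
          case False
          then have "x < Y n" using Y(3)[of n] by auto
          have "\<And>s. x \<le> s \<Longrightarrow> s \<le> Y n \<Longrightarrow> ((\<lambda>s. f s u) has_real_derivative f' s u) (at s)"
            using der Y(2) ab(1) by (meson le_less_trans less_le_trans)
          from MVT2[OF \<open>x < Y n\<close> this] obtain z where
            "x < z" "z < Y n" "f (Y n) u - f x u = (Y n - x) * f' z u" by blast
          then show ?thesis using Y(1,2)[of n] ab by (intro exI[of _ z]) (auto simp: algebra_simps)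
        qed
        then obtain z where z: "a < z" "z < b" "f (Y n) u - f x u = (Y n - x) * f' z u" by blast
        have "s n u = f' z u" using z(3) Y(3) by (simp add: s_def)
        then show "norm (s n u) \<le> w u" using bnd[OF z(1,2)] by simp
      qed
    qed
    then have "(\<lambda>n. (?F (Y n) - ?F x) / (Y n - x)) \<longlonglongrightarrow> (LINT u|lborel. f' x u)"
      by (simp add: Fs)
    then have "(\<lambda>n. (?F (X (n + N)) - ?F x) / (X (n + N) - x)) \<longlonglongrightarrow> (LINT u|lborel. f' x u)"
      by (simp add: Y_def)
    then show "((\<lambda>y. (?F y - ?F x) / (y - x)) \<circ> X) \<longlonglongrightarrow> (LINT u|lborel. f' x u)"
      unfolding o_def by (rule LIMSEQ_offset)
  qed
  then show ?thesis by (simp add: has_field_derivative_iff)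
qed



lemma gamma_int:
  fixes p :: real assumes p: "p > 0"
  shows "integrable lborel (\<lambda>u. indicator {0<..} u * (u powr (p-1) * exp (-u)))"
    and "(LINT u|lborel. indicator {0<..} u * (u powr (p-1) * exp (-u))) = Gamma p"
proof -
  have eq: "ennreal (indicator {0..} t * t powr (p - 1) / exp t) = ennreal (indicator {0<..} t * (t powr (p-1) * exp (-t)))" for t
    by (cases "t = 0") (auto simp: indicator_def exp_minus field_simps)
  have nn: "(\<integral>\<^sup>+u. ennreal (indicator {0<..} u * (u powr (p-1) * exp (-u))) \<partial>lborel) = ennreal (Gamma p)"
    using Gamma_conv_nn_integral_real[OF p] eq by simp
  have m: "(\<lambda>u. indicator {0<..} u * (u powr (p-1) * exp (-u))) \<in> borel_measurable lborel" by measurable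
  show "integrable lborel (\<lambda>u. indicator {0<..} u * (u powr (p-1) * exp (-u)))"
  proof (rule integrableI_nonneg[OF m])
    show "AE x in lborel. 0 \<le> indicator {0<..} x * (x powr (p - 1) * exp (- x))"
      by (auto simp: indicator_def)
    show "(\<integral>\<^sup>+u. ennreal (indicator {0<..} u * (u powr (p-1) * exp (-u))) \<partial>lborel) < \<infinity>"
      unfolding nn by simp
  qed
  show "(LINT u|lborel. indicator {0<..} u * (u powr (p-1) * exp (-u))) = Gamma p"
  proof (subst integral_eq_nn_integral[OF m])
    show "AE x in lborel. 0 \<le> indicator {0<..} x * (x powr (p - 1) * exp (- x))"
      by (auto simp: indicator_def)
    show "enn2real (\<integral>\<^sup>+u. ennreal (indicator {0<..} u * (u powr (p-1) * exp (-u))) \<partial>lborel) = Gamma p"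
      unfolding nn using Gamma_real_pos[OF p] by simp
  qed
qed

lemma E0: "integrable lborel (\<lambda>u::real. indicator {0<..} u * exp (-u))"
  "(LINT (u::real)|lborel. indicator {0<..} u * exp (-u)) = 1"
proof -
  have e: "indicator {0<..} u * (u powr (1-1) * exp (-u)) = indicator {0<..} u * exp (-u)" for u :: real
    by (auto simp: indicator_def)
  show "integrable lborel (\<lambda>u::real. indicator {0<..} u * exp (-u))"
    using gamma_int(1)[of 1] by (simp only: e)
  show "(LINT (u::real)|lborel. indicator {0<..} u * exp (-u)) = 1"
    using gamma_int(2)[of 1] by (simp only: e) simp
qed

lemma E1: "integrable lborel (\<lambda>u::real. indicator {0<..} u * (u * exp (-u)))"
proof -
  have e: "indicator {0<..} u * (u powr (2-1) * exp (-u)) = indicator {0<..} u * (u * exp (-u))" for u :: real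
    by (auto simp: indicator_def)
  show ?thesis using gamma_int(1)[of 2] by (simp only: e)
qed

lemma Eh: "integrable lborel (\<lambda>u::real. indicator {0<..} u * (u powr (-1/2) * exp (-u)))"
proof -
  have e: "indicator {0<..} u * (u powr (1/2-1) * exp (-u)) = indicator {0<..} u * (u powr (-1/2) * exp (-u))" for u :: real
    by (auto simp: indicator_def)
  show ?thesis using gamma_int(1)[of "1/2"] by (simp only: e)
qed

lemma exp_ge_pow_fact: "0 \<le> (x::real) \<Longrightarrow> x ^ n / fact n \<le> exp x"
proof -
  assume x: "0 \<le> x"
  have s: "summable (\<lambda>k. x ^ k /\<^sub>R fact k)" using exp_converges sums_summable by blast
  have "sum (\<lambda>k. x ^ k /\<^sub>R fact k) {n} \<le> suminf (\<lambda>k. x ^ k /\<^sub>R fact k)"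
    by (rule sum_le_suminf[OF s]) (use x in auto)
  then show ?thesis using exp_converges[of x] sums_unique by (fastforce simp: divide_inverse mult.commute)
qed

lemma exp_inv_bound:
  fixes u c :: real assumes "u > 0" "c > 0"
  shows "exp (- c / u) / u ^ n \<le> fact n / c ^ n"
proof -
  have "(c/u) ^ n / fact n \<le> exp (c/u)" using assms by (intro exp_ge_pow_fact) simp
  then have "c ^ n \<le> fact n * u ^ n * exp (c / u)"
    using assms by (simp add: field_simps power_divide)
  then show ?thesis using assms by (simp add: field_simps exp_minus)
qed

lemma ln_abs_bound: "(u::real) > 0 \<Longrightarrow> \<bar>ln u\<bar> \<le> u + 2 * u powr (-1/2)"
proof -
  assume u: "u > 0"
  show ?thesis
  proof (cases "u \<ge> 1")
    case True
    then have "ln u \<ge> 0" by simp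
    moreover have "u powr (-1/2) \<ge> 0" by simp
    ultimately show ?thesis using ln_le_minus_one[OF u] by linarith
  next
    case False
    have "ln (u powr (-1/2)) \<le> u powr (-1/2) - 1" using u by (intro ln_le_minus_one) simp
    then have "-ln u / 2 \<le> u powr (-1/2)" using u by (simp add: ln_powr)
    then show ?thesis using False u by (simp add: abs_if)
  qed
qed

lemma ln_abs_bound2: "(u::real) > 0 \<Longrightarrow> \<bar>ln u\<bar> \<le> u + 1 / u"
proof -
  assume u: "u > 0"
  show ?thesis
  proof (cases "u \<ge> 1")
    case True
    then have "ln u \<ge> 0" by simp
    moreover have "1 / u \<ge> 0" using u by simp
    ultimately show ?thesis using ln_le_minus_one[OF u] by linarith
  next
    case False
    have "ln (1/u) \<le> 1/u - 1" using u by (intro ln_le_minus_one) simp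
    then show ?thesis using False u by (simp add: abs_if ln_div)
  qed
qed



definition Gf :: "real \<Rightarrow> real" where
  "Gf t = (LINT u|lborel. indicator {0<..} u * exp (-u - t/u))"
definition Hf :: "real \<Rightarrow> real" where
  "Hf t = (LINT u|lborel. indicator {0<..} u * (exp (-u - t/u) / u))"
definition Kf :: "real \<Rightarrow> real" where
  "Kf t = (LINT u|lborel. indicator {0<..} u * (exp (-u - t/u) / u\<^sup>2))"
definition Jf :: "real \<Rightarrow> real" where
  "Jf t = (LINT u|lborel. indicator {0<..} u * (ln u * exp (-u - t/u)))"
definition Lf :: "real \<Rightarrow> real" where
  "Lf t = (LINT u|lborel. indicator {0<..} u * (ln u * exp (-u - t/u) / u\<^sup>2))"

lemma exp_split: "exp (-u - c/u) = exp (-u) * exp (- (c/u))" for u c :: real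
  by (simp add: exp_add[symmetric])

lemma IG: fixes c :: real assumes "c \<ge> 0" shows "integrable lborel (\<lambda>u. indicator {0<..} u * exp (-u - c/u))"
proof (rule Bochner_Integration.integrable_bound)
  show "integrable lborel (\<lambda>u::real. indicator {0<..} u * exp (-u))" by (rule E0)
  show "(\<lambda>u. indicator {0<..} u * exp (-u - c/u)) \<in> borel_measurable lborel" by measurable
  show "AE u in lborel. norm (indicator {0<..} u * exp (-u - c/u)) \<le> norm (indicator {0<..} u * exp (-u) :: real)"
  proof (rule AE_I2)
    fix u :: real
    show "norm (indicator {0<..} u * exp (-u - c/u)) \<le> norm (indicator {0<..} u * exp (-u) :: real)"
    proof (cases "u > 0")
      case True
      have "exp (- (c/u)) \<le> 1" using True assms by simp
      then have "exp (-u) * exp (- (c/u)) \<le> exp (-u) * 1" by (intro mult_left_mono) auto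
      then show ?thesis using True by (simp add: exp_split)
    qed simp
  qed
qed

lemma IH: fixes c :: real assumes "c > 0" shows "integrable lborel (\<lambda>u. indicator {0<..} u * (exp (-u - c/u) / u))"
proof (rule Bochner_Integration.integrable_bound)
  show "integrable lborel (\<lambda>u::real. 1/c * (indicator {0<..} u * exp (-u)))" using E0(1) by (rule integrable_mult_right)
  show "(\<lambda>u. indicator {0<..} u * (exp (-u - c/u) / u)) \<in> borel_measurable lborel" by measurable
  show "AE u in lborel. norm (indicator {0<..} u * (exp (-u - c/u) / u)) \<le> norm (1/c * (indicator {0<..} u * exp (-u)) :: real)"
  proof (rule AE_I2)
    fix u :: real
    show "norm (indicator {0<..} u * (exp (-u - c/u) / u)) \<le> norm (1/c * (indicator {0<..} u * exp (-u)) :: real)"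
    proof (cases "u > 0")
      case True
      have "exp (- c / u) / u ^ 1 \<le> fact 1 / c ^ 1" by (rule exp_inv_bound[OF True assms])
      then have "exp (- (c / u)) / u \<le> 1 / c" by simp
      then have "exp (-u) * (exp (- (c/u)) / u) \<le> exp (-u) * (1/c)" by (intro mult_left_mono) auto
      then show ?thesis using True assms by (simp add: exp_split)
    qed simp
  qed
qed

lemma IK: fixes c :: real assumes "c > 0" shows "integrable lborel (\<lambda>u. indicator {0<..} u * (exp (-u - c/u) / u\<^sup>2))"
proof (rule Bochner_Integration.integrable_bound)
  show "integrable lborel (\<lambda>u::real. 2/c^2 * (indicator {0<..} u * exp (-u)))" using E0(1) by (rule integrable_mult_right)
  show "(\<lambda>u. indicator {0<..} u * (exp (-u - c/u) / u\<^sup>2)) \<in> borel_measurable lborel" by measurable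
  show "AE u in lborel. norm (indicator {0<..} u * (exp (-u - c/u) / u\<^sup>2)) \<le> norm (2/c^2 * (indicator {0<..} u * exp (-u)) :: real)"
  proof (rule AE_I2)
    fix u :: real
    show "norm (indicator {0<..} u * (exp (-u - c/u) / u\<^sup>2)) \<le> norm (2/c^2 * (indicator {0<..} u * exp (-u)) :: real)"
    proof (cases "u > 0")
      case True
      have "exp (- c / u) / u ^ 2 \<le> fact 2 / c ^ 2" by (rule exp_inv_bound[OF True assms])
      then have "exp (- (c / u)) / u\<^sup>2 \<le> 2 / c\<^sup>2" by (simp add: fact_numeral)
      then have "exp (-u) * (exp (- (c/u)) / u\<^sup>2) \<le> exp (-u) * (2/c\<^sup>2)" by (intro mult_left_mono) auto
      then show ?thesis using True assms by (simp add: exp_split mult_ac)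
    qed simp
  qed
qed

lemma IJ: fixes c :: real assumes "c \<ge> 0" shows "integrable lborel (\<lambda>u. indicator {0<..} u * (ln u * exp (-u - c/u)))"
proof (rule Bochner_Integration.integrable_bound)
  show "integrable lborel (\<lambda>u::real. indicator {0<..} u * (u * exp (-u)) + 2 * (indicator {0<..} u * (u powr (-1/2) * exp (-u))))"
    by (rule Bochner_Integration.integrable_add[OF E1 integrable_mult_right[OF Eh]])
  show "(\<lambda>u. indicator {0<..} u * (ln u * exp (-u - c/u))) \<in> borel_measurable lborel" by measurable
  show "AE u in lborel. norm (indicator {0<..} u * (ln u * exp (-u - c/u))) \<le> norm (indicator {0<..} u * (u * exp (-u)) + 2 * (indicator {0<..} u * (u powr (-1/2) * exp (-u))) :: real)"
  proof (rule AE_I2)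
    fix u :: real
    show "norm (indicator {0<..} u * (ln u * exp (-u - c/u))) \<le> norm (indicator {0<..} u * (u * exp (-u)) + 2 * (indicator {0<..} u * (u powr (-1/2) * exp (-u))) :: real)"
    proof (cases "u > 0")
      case True
      have "exp (- (c/u)) \<le> 1" using True assms by simp
      have "\<bar>ln u\<bar> * exp (- (c/u)) \<le> (u + 2 * u powr (-1/2)) * 1"
        using ln_abs_bound[OF True] \<open>exp (- (c/u)) \<le> 1\<close> by (intro mult_mono) auto
      then have "exp (-u) * (\<bar>ln u\<bar> * exp (- (c/u))) \<le> exp (-u) * (u + 2 * u powr (-1/2))"
        by (intro mult_left_mono) auto
      then show ?thesis using True by (simp add: exp_split abs_mult algebra_simps)
    qed simp
  qed
qed

lemma IL: fixes c :: real assumes "c > 0" shows "integrable lborel (\<lambda>u. indicator {0<..} u * (ln u * exp (-u - c/u) / u\<^sup>2))"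
proof (rule Bochner_Integration.integrable_bound)
  show "integrable lborel (\<lambda>u::real. (1/c + 6/c^3) * (indicator {0<..} u * exp (-u)))" using E0(1) by (rule integrable_mult_right)
  show "(\<lambda>u. indicator {0<..} u * (ln u * exp (-u - c/u) / u\<^sup>2)) \<in> borel_measurable lborel" by measurable
  show "AE u in lborel. norm (indicator {0<..} u * (ln u * exp (-u - c/u) / u\<^sup>2)) \<le> norm ((1/c + 6/c^3) * (indicator {0<..} u * exp (-u)) :: real)"
  proof (rule AE_I2)
    fix u :: real
    show "norm (indicator {0<..} u * (ln u * exp (-u - c/u) / u\<^sup>2)) \<le> norm ((1/c + 6/c^3) * (indicator {0<..} u * exp (-u)) :: real)"
    proof (cases "u > 0")
      case True
      have b1: "exp (- c / u) / u ^ 1 \<le> fact 1 / c ^ 1" by (rule exp_inv_bound[OF True assms])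
      have b3: "exp (- c / u) / u ^ 3 \<le> fact 3 / c ^ 3" by (rule exp_inv_bound[OF True assms])
      have "\<bar>ln u\<bar> * exp (- (c/u)) / u\<^sup>2 \<le> (u + 1/u) * exp (- (c/u)) / u\<^sup>2"
        using ln_abs_bound2[OF True] True by (intro divide_right_mono mult_right_mono) auto
      also have "\<dots> = exp (- c / u) / u ^ 1 + exp (- c / u) / u ^ 3"
        using True by (simp add: field_simps power2_eq_square power3_eq_cube)
      also have "\<dots> \<le> 1/c + 6/c^3" using b1 b3 by (simp add: fact_numeral)
      finally have "\<bar>ln u\<bar> * exp (- (c/u)) / u\<^sup>2 \<le> 1/c + 6/c^3" .
      then have "exp (-u) * (\<bar>ln u\<bar> * exp (- (c/u)) / u\<^sup>2) \<le> exp (-u) * (1/c + 6/c^3)"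
        by (intro mult_left_mono) auto
      then show ?thesis using True assms by (simp add: exp_split abs_mult algebra_simps)
    qed simp
  qed
qed



lemma DG: assumes t: "t > 0" shows "(Gf has_real_derivative - Hf t) (at t)"
proof -
  have "((\<lambda>s. LINT u|lborel. indicator {0<..} u * exp (-u - s/u)) has_real_derivative
        (LINT u|lborel. - (indicator {0<..} u * (exp (-u - t/u) / u)))) (at t)"
  proof (rule DERIV_LINT[where a="t/2" and b="2*t" and w="\<lambda>u. indicator {0<..} u * (exp (-u - (t/2)/u) / u)"])
    show "t/2 < t" "t < 2*t" using t by auto
    show "integrable lborel (\<lambda>u. indicator {0<..} u * exp (-u - s/u))" if "t/2 < s" "s < 2*t" for s
      using that t by (intro IG) auto
    show "((\<lambda>s. indicator {0<..} u * exp (-u - s/u)) has_real_derivative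
           - (indicator {0<..} u * (exp (-u - s/u) / u))) (at s)" for s u :: real
      by (cases "u > 0") (auto intro!: derivative_eq_intros simp: field_simps)
    show "\<bar>- (indicator {0<..} u * (exp (-u - s/u) / u))\<bar> \<le> indicator {0<..} u * (exp (-u - (t/2)/u) / u)"
      if "t/2 < s" "s < 2*t" for s u :: real
    proof (cases "u > 0")
      case True
      have "(t/2)/u \<le> s/u" using that True by (intro divide_right_mono) auto
      then have "exp (-u - s/u) \<le> exp (-u - (t/2)/u)" by simp
      then show ?thesis using True by (simp add: divide_right_mono)
    qed simp
    show "integrable lborel (\<lambda>u. indicator {0<..} u * (exp (-u - (t/2)/u) / u))"
      using t by (intro IH) auto
    show "(\<lambda>u. - (indicator {0<..} u * (exp (-u - t/u) / u))) \<in> borel_measurable lborel" by measurable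
  qed
  then show ?thesis unfolding Gf_def Hf_def by simp
qed

lemma DH: assumes t: "t > 0" shows "(Hf has_real_derivative - Kf t) (at t)"
proof -
  have "((\<lambda>s. LINT u|lborel. indicator {0<..} u * (exp (-u - s/u) / u)) has_real_derivative
        (LINT u|lborel. - (indicator {0<..} u * (exp (-u - t/u) / u\<^sup>2)))) (at t)"
  proof (rule DERIV_LINT[where a="t/2" and b="2*t" and w="\<lambda>u. indicator {0<..} u * (exp (-u - (t/2)/u) / u\<^sup>2)"])
    show "t/2 < t" "t < 2*t" using t by auto
    show "integrable lborel (\<lambda>u. indicator {0<..} u * (exp (-u - s/u) / u))" if "t/2 < s" "s < 2*t" for s
      using that t by (intro IH) auto
    show "((\<lambda>s. indicator {0<..} u * (exp (-u - s/u) / u)) has_real_derivative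
           - (indicator {0<..} u * (exp (-u - s/u) / u\<^sup>2))) (at s)" for s u :: real
      by (cases "u > 0") (auto intro!: derivative_eq_intros simp: field_simps power2_eq_square)
    show "\<bar>- (indicator {0<..} u * (exp (-u - s/u) / u\<^sup>2))\<bar> \<le> indicator {0<..} u * (exp (-u - (t/2)/u) / u\<^sup>2)"
      if "t/2 < s" "s < 2*t" for s u :: real
    proof (cases "u > 0")
      case True
      have "(t/2)/u \<le> s/u" using that True by (intro divide_right_mono) auto
      then have "exp (-u - s/u) \<le> exp (-u - (t/2)/u)" by simp
      then show ?thesis using True by (simp add: divide_right_mono)
    qed simp
    show "integrable lborel (\<lambda>u. indicator {0<..} u * (exp (-u - (t/2)/u) / u\<^sup>2))"
      using t by (intro IK) auto
    show "(\<lambda>u. - (indicator {0<..} u * (exp (-u - t/u) / u\<^sup>2))) \<in> borel_measurable lborel" by measurable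
  qed
  then show ?thesis unfolding Hf_def Kf_def by simp
qed

lemma LINT_right0:
  fixes f :: "real \<Rightarrow> real \<Rightarrow> real" and w :: "real \<Rightarrow> real"
  assumes meas: "\<And>t. 0 < t \<Longrightarrow> t < 1 \<Longrightarrow> f t \<in> borel_measurable lborel"
  assumes meas0: "g \<in> borel_measurable lborel"
  assumes lim: "\<And>u. ((\<lambda>t. f t u) \<longlongrightarrow> g u) (at_right 0)"
  assumes bnd: "\<And>t u. 0 < t \<Longrightarrow> t < 1 \<Longrightarrow> \<bar>f t u\<bar> \<le> w u"
  assumes w: "integrable lborel w"
  shows "((\<lambda>t. LINT u|lborel. f t u) \<longlongrightarrow> (LINT u|lborel. g u)) (at_right 0)"
  unfolding tendsto_at_iff_sequentially
proof (intro allI impI)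
  fix X :: "nat \<Rightarrow> real"
  assume X: "\<forall>i. X i \<in> {0<..} - {0}" and Xl: "X \<longlonglongrightarrow> 0"
  have "eventually (\<lambda>n. X n \<in> {..<1}) sequentially"
    using Xl by (intro topological_tendstoD) auto
  then obtain N where N: "\<And>n. n \<ge> N \<Longrightarrow> X n < 1"
    by (auto simp: eventually_sequentially)
  define Y where "Y n = X (n + N)" for n
  have Y: "0 < Y n" "Y n < 1" for n using N[of "n+N"] X by (auto simp: Y_def)
  have Yl: "Y \<longlonglongrightarrow> 0" unfolding Y_def using LIMSEQ_ignore_initial_segment[OF Xl] .
  have "(\<lambda>n. LINT u|lborel. f (Y n) u) \<longlonglongrightarrow> (LINT u|lborel. g u)"
  proof (rule integral_dominated_convergence[where w=w])
    show "g \<in> borel_measurable lborel" by fact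
    show "integrable lborel w" by fact
    show "f (Y n) \<in> borel_measurable lborel" for n using meas[OF Y(1,2)] .
    show "AE u in lborel. (\<lambda>n. f (Y n) u) \<longlonglongrightarrow> g u"
    proof (intro AE_I2)
      fix u
      have "((\<lambda>t. f t u) \<circ> Y) \<longlonglongrightarrow> g u"
        using lim[of u] unfolding tendsto_at_iff_sequentially using Y Yl by auto
      then show "(\<lambda>n. f (Y n) u) \<longlonglongrightarrow> g u" by (simp add: o_def)
    qed
    show "AE u in lborel. norm (f (Y n) u) \<le> w u" for n
      using bnd[OF Y(1,2)] by simp
  qed
  then have "(\<lambda>n. LINT u|lborel. f (X (n + N)) u) \<longlonglongrightarrow> (LINT u|lborel. g u)"
    by (simp add: Y_def)
  then show "((\<lambda>t. LINT u|lborel. f t u) \<circ> X) \<longlonglongrightarrow> (LINT u|lborel. g u)"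
    unfolding o_def by (rule LIMSEQ_offset)
qed

lemma G0: "Gf 0 = 1" unfolding Gf_def using E0(2) by simp

lemma G_lim: "(Gf \<longlongrightarrow> 1) (at_right 0)"
proof -
  have "((\<lambda>t::real. LINT u|lborel. indicator {0<..} (u::real) * exp (-u - t/u)) \<longlongrightarrow>
         (LINT u|lborel. indicator {0<..} u * exp (-u - 0/u))) (at_right 0)"
  proof (rule LINT_right0[of "\<lambda>t u. indicator {0<..} u * exp (-u - t/u)" "\<lambda>u. indicator {0<..} u * exp (-u - 0/u)" "\<lambda>u. indicator {0<..} u * exp (-u)"])
    show "(\<lambda>u. indicator {0<..} u * exp (-u - t/u)) \<in> borel_measurable lborel" for t :: real by measurable
    show "(\<lambda>u::real. indicator {0<..} u * exp (-u - 0/u)) \<in> borel_measurable lborel" by measurable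
    show "((\<lambda>t. indicator {0<..} u * exp (-u - t/u)) \<longlongrightarrow> indicator {0<..} u * exp (-u - 0/u)) (at_right 0)" for u :: real
      by (cases "u = 0") (auto intro!: tendsto_eq_intros)
    show "\<bar>indicator {0<..} u * exp (-u - t/u)\<bar> \<le> indicator {0<..} u * exp (-u)" if "0 < t" "t < 1" for t u :: real
      using that by (cases "u > 0") auto
    show "integrable lborel (\<lambda>u::real. indicator {0<..} u * exp (-u))" by (rule E0)
  qed
  then show ?thesis using G0 unfolding Gf_def by simp
qed

lemma J_lim: "(Jf \<longlongrightarrow> Jf 0) (at_right 0)"
proof -
  have "((\<lambda>t::real. LINT u|lborel. indicator {0<..} (u::real) * (ln u * exp (-u - t/u))) \<longlongrightarrow>
         (LINT u|lborel. indicator {0<..} u * (ln u * exp (-u - 0/u)))) (at_right 0)"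
  proof (rule LINT_right0[where w="\<lambda>u. indicator {0<..} u * (\<bar>ln u\<bar> * exp (-u))"])
    show "(\<lambda>u. indicator {0<..} u * (ln u * exp (-u - t/u))) \<in> borel_measurable lborel" for t :: real by measurable
    show "(\<lambda>u::real. indicator {0<..} u * (ln u * exp (-u - 0/u))) \<in> borel_measurable lborel" by measurable
    show "((\<lambda>t. indicator {0<..} u * (ln u * exp (-u - t/u))) \<longlongrightarrow> indicator {0<..} u * (ln u * exp (-u - 0/u))) (at_right 0)" for u :: real
      by (cases "u = 0") (auto intro!: tendsto_eq_intros)
    show "\<bar>indicator {0<..} u * (ln u * exp (-u - t/u))\<bar> \<le> indicator {0<..} u * (\<bar>ln u\<bar> * exp (-u))" if "0 < t" "t < 1" for t u :: real
      using that by (cases "u > 0") (auto simp: abs_mult intro!: mult_left_mono)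
    show "integrable lborel (\<lambda>u::real. indicator {0<..} u * (\<bar>ln u\<bar> * exp (-u)))"
    proof -
      have "integrable lborel (\<lambda>u::real. \<bar>indicator {0<..} u * (ln u * exp (-u - 0/u))\<bar>)"
        using IJ[of 0] by (intro integrable_abs) auto
      then show ?thesis by (rule Bochner_Integration.integrable_cong[THEN iffD1, rotated 2]) (auto simp: abs_mult)
    qed
  qed
  then show ?thesis unfolding Jf_def by simp
qed



lemma ln_small: "(u::real) > 0 \<Longrightarrow> - ln u \<le> 2 * u powr (-1/2)"
proof -
  assume u: "u > 0"
  have "ln (u powr (-1/2)) \<le> u powr (-1/2) - 1" using u by (intro ln_le_minus_one) simp
  then have "-ln u / 2 \<le> u powr (-1/2)" using u by (simp add: ln_powr)
  then show ?thesis by simp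
qed

lemma gamma_deriv_bound:
  fixes u s :: real assumes u: "u > 0" and s: "3/4 < s" "s < 5/4"
  shows "\<bar>ln u * u powr (s - 1) * exp (-u)\<bar> \<le> (u powr (5/4) + 2 * u powr (-3/4)) * exp (-u)"
proof -
  have "\<bar>ln u\<bar> * u powr (s - 1) \<le> u powr (5/4) + 2 * u powr (-3/4)"
  proof (cases "u \<ge> 1")
    case True
    have l: "\<bar>ln u\<bar> \<le> u" using True ln_le_minus_one[OF u] by simp
    have p: "u powr (s - 1) \<le> u powr (1/4)" using True s by (intro powr_mono) auto
    have "\<bar>ln u\<bar> * u powr (s - 1) \<le> u * u powr (1/4)" using l p by (intro mult_mono) auto
    also have "u * u powr (1/4) = u powr (5/4)"
    proof -
      have "u powr (5/4) = u powr (1 + 1/4)" by simp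
      also have "\<dots> = u powr 1 * u powr (1/4)" by (rule powr_add)
      finally show ?thesis using u by simp
    qed
    finally show ?thesis using powr_ge_zero[of u "-3/4"] by linarith
  next
    case False
    have l: "\<bar>ln u\<bar> \<le> 2 * u powr (-1/2)" using False ln_small[OF u] u by simp
    have p: "u powr (s - 1) \<le> u powr (-1/4)" using False s u by (intro powr_mono') auto
    have "\<bar>ln u\<bar> * u powr (s - 1) \<le> (2 * u powr (-1/2)) * u powr (-1/4)" using l p by (intro mult_mono) auto
    also have "(2 * u powr (-1/2)) * u powr (-1/4) = 2 * u powr (-3/4)" using u by (simp add: powr_add[symmetric])
    finally show ?thesis using powr_ge_zero[of u "5/4"] by linarith
  qed
  then have "\<bar>ln u\<bar> * u powr (s - 1) * exp (-u) \<le> (u powr (5/4) + 2 * u powr (-3/4)) * exp (-u)"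
    by (intro mult_right_mono) auto
  then show ?thesis by (simp add: abs_mult)
qed

lemma J0: "Jf 0 = Digamma 1"
proof -
  let ?w = "\<lambda>u::real. indicator {0<..} u * ((u powr (5/4) + 2 * u powr (-3/4)) * exp (-u))"
  have d1: "((\<lambda>s. LINT u|lborel. indicator {0<..} u * (u powr (s-1) * exp (-u))) has_real_derivative
        (LINT u|lborel. indicator {0<..} u * (ln u * u powr (1-1) * exp (-u)))) (at 1)"
  proof (rule DERIV_LINT[where a="3/4" and b="5/4" and w="?w" and f'="\<lambda>s u. indicator {0<..} u * (ln u * u powr (s-1) * exp (-u))"])
    show "3/4 < (1::real)" "1 < (5/4::real)" by auto
    show "integrable lborel (\<lambda>u. indicator {0<..} u * (u powr (s-1) * exp (-u)))" if "3/4 < s" "s < 5/4" for s :: real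
      using that by (intro gamma_int) auto
    show "((\<lambda>s. indicator {0<..} u * (u powr (s-1) * exp (-u))) has_real_derivative
           indicator {0<..} u * (ln u * u powr (s-1) * exp (-u))) (at s)" for s u :: real
      by (cases "u > 0") (auto intro!: derivative_eq_intros simp: field_simps)
    show "\<bar>indicator {0<..} u * (ln u * u powr (s-1) * exp (-u))\<bar> \<le> ?w u"
      if "3/4 < s" "s < 5/4" for s u :: real
      using gamma_deriv_bound[of u s] that by (cases "u > 0") auto
    have i1: "integrable lborel (\<lambda>u::real. indicator {0<..} u * (u powr (9/4 - 1) * exp (-u)))" by (rule gamma_int) simp
    have i2: "integrable lborel (\<lambda>u::real. indicator {0<..} u * (u powr (1/4 - 1) * exp (-u)))" by (rule gamma_int) simp
    have "integrable lborel (\<lambda>u::real. indicator {0<..} u * (u powr (9/4 - 1) * exp (-u)) + 2 * (indicator {0<..} u * (u powr (1/4 - 1) * exp (-u))))"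
      by (rule Bochner_Integration.integrable_add[OF i1 integrable_mult_right[OF i2]])
    then show "integrable lborel ?w" by (simp add: algebra_simps)
    show "(\<lambda>u::real. indicator {0<..} u * (ln u * u powr (1-1) * exp (-u))) \<in> borel_measurable lborel" by measurable
  qed
  have d2: "((\<lambda>s. LINT u|lborel. indicator {0<..} u * (u powr (s-1) * exp (-u))) has_real_derivative Gamma 1 * Digamma 1) (at 1)"
  proof (rule has_field_derivative_transform_within_open[where S="{0<..}"])
    show "(Gamma has_real_derivative Gamma 1 * Digamma 1) (at 1)"
      by (rule has_field_derivative_Gamma) simp
    show "Gamma s = (LINT u|lborel. indicator {0<..} u * (u powr (s-1) * exp (-u)))" if "s \<in> {0<..}" for s :: real
      using gamma_int(2)[of s] that by simp
  qed auto
  have "(LINT u|lborel. indicator {0<..} (u::real) * (ln u * u powr (1-1) * exp (-u))) = Gamma 1 * Digamma 1"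
    using DERIV_unique[OF d1 d2] .
  moreover have "(LINT u|lborel. indicator {0<..} (u::real) * (ln u * u powr (1-1) * exp (-u))) = Jf 0"
    unfolding Jf_def by (intro Bochner_Integration.integral_cong) (auto simp: indicator_def)
  ultimately show ?thesis by simp
qed



lemma IBP0:
  fixes F f :: "real \<Rightarrow> real"
  assumes der: "\<And>u. 0 < u \<Longrightarrow> (F has_real_derivative f u) (at u)"
  assumes cont: "\<And>u. 0 < u \<Longrightarrow> isCont f u"
  assumes int: "integrable lborel (\<lambda>u. indicator {0<..} u * f u)"
  assumes l0: "(F \<longlongrightarrow> 0) (at_right 0)" and li: "(F \<longlongrightarrow> 0) at_top"
  shows "(LINT u|lborel. indicator {0<..} u * f u) = 0"
proof -
  have "(LBINT x=ereal 0..\<infinity>. f x) = 0 - 0"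
  proof (rule interval_integral_FTC_integrable[where F=F])
    show "ereal 0 < \<infinity>" by simp
    show "(F has_vector_derivative f x) (at x)" if "ereal 0 < ereal x" "ereal x < \<infinity>" for x
      using der[of x] that by (simp add: has_real_derivative_iff_has_vector_derivative)
    show "isCont f x" if "ereal 0 < ereal x" "ereal x < \<infinity>" for x
      using cont[of x] that by simp
    show "set_integrable lborel (einterval (ereal 0) \<infinity>) f"
      using int by (simp add: set_integrable_def)
    show "((F \<circ> real_of_ereal) \<longlongrightarrow> 0) (at_right (ereal 0))"
      using l0 by (simp add: ereal_tendsto_simps1)
    show "((F \<circ> real_of_ereal) \<longlongrightarrow> 0) (at_left \<infinity>)"
      using li by (simp add: ereal_tendsto_simps1)
  qed
  then show ?thesis
    by (simp add: interval_integral_to_infinity_eq set_lebesgue_integral_def)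
qed

lemma tK: assumes t: "t > 0" shows "t * Kf t = Gf t"
proof -
  let ?f = "\<lambda>u. t * (exp (-u - t/u) / u\<^sup>2) - exp (-u - t/u)"
  have i: "integrable lborel (\<lambda>u. t * (indicator {0<..} u * (exp (-u - t/u) / u\<^sup>2)) - indicator {0<..} u * exp (-u - t/u))"
    using IK[OF t] IG[of t] t by (intro Bochner_Integration.integrable_diff integrable_mult_right) auto
  have eq: "(\<lambda>u. indicator {0<..} u * ?f u) = (\<lambda>u. t * (indicator {0<..} u * (exp (-u - t/u) / u\<^sup>2)) - indicator {0<..} u * exp (-u - t/u))"
    by (auto simp: indicator_def fun_eq_iff algebra_simps)
  have "(LINT u|lborel. indicator {0<..} u * ?f u) = 0"
  proof (rule IBP0[where F="\<lambda>u. exp (-u - t/u)"])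
    show "((\<lambda>u. exp (-u - t/u)) has_real_derivative ?f u) (at u)" if "0 < u" for u
      using that by (auto intro!: derivative_eq_intros simp: field_simps power2_eq_square)
    show "isCont ?f u" if "0 < u" for u using that by (auto intro!: continuous_intros)
    show "integrable lborel (\<lambda>u. indicator {0<..} u * ?f u)" unfolding eq by (rule i)
    show "((\<lambda>u. exp (-u - t/u)) \<longlongrightarrow> 0) (at_right 0)" using t by real_asymp
    show "((\<lambda>u. exp (-u - t/u)) \<longlongrightarrow> 0) at_top" using t by real_asymp
  qed
  also have "(LINT u|lborel. indicator {0<..} u * ?f u) = t * Kf t - Gf t"
    unfolding eq Kf_def Gf_def
    by (simp only: Bochner_Integration.integral_diff[OF integrable_mult_right[OF IK[OF t]] IG[OF less_imp_le[OF t]]] integral_mult_right_zero)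
  finally show ?thesis by simp
qed

lemma HLJ: assumes t: "t > 0" shows "Hf t + t * Lf t - Jf t = 0"
proof -
  let ?f = "\<lambda>u. exp (-u - t/u) / u + t * (ln u * exp (-u - t/u) / u\<^sup>2) - ln u * exp (-u - t/u)"
  let ?g = "\<lambda>u. indicator {0<..} u * (exp (-u - t/u) / u) + t * (indicator {0<..} u * (ln u * exp (-u - t/u) / u\<^sup>2)) - indicator {0<..} u * (ln u * exp (-u - t/u))"
  have i: "integrable lborel ?g"
    using IH[OF t] IL[OF t] IJ[of t] t
    by (intro Bochner_Integration.integrable_diff Bochner_Integration.integrable_add integrable_mult_right) auto
  have eq: "(\<lambda>u. indicator {0<..} u * ?f u) = ?g"
    by (auto simp: indicator_def fun_eq_iff algebra_simps)
  have "(LINT u|lborel. indicator {0<..} u * ?f u) = 0"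
  proof (rule IBP0[where F="\<lambda>u. ln u * exp (-u - t/u)"])
    show "((\<lambda>u. ln u * exp (-u - t/u)) has_real_derivative ?f u) (at u)" if "0 < u" for u
      using that by (auto intro!: derivative_eq_intros simp: field_simps power2_eq_square)
    show "isCont ?f u" if "0 < u" for u using that by (auto intro!: continuous_intros)
    show "integrable lborel (\<lambda>u. indicator {0<..} u * ?f u)" unfolding eq by (rule i)
    show "((\<lambda>u. ln u * exp (-u - t/u)) \<longlongrightarrow> 0) (at_right 0)" using t by real_asymp
    show "((\<lambda>u. ln u * exp (-u - t/u)) \<longlongrightarrow> 0) at_top" using t by real_asymp
  qed
  also have "(LINT u|lborel. indicator {0<..} u * ?f u) = Hf t + t * Lf t - Jf t"
    unfolding eq Hf_def Lf_def Jf_def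
    by (simp only: Bochner_Integration.integral_diff[OF Bochner_Integration.integrable_add[OF IH[OF t] integrable_mult_right[OF IL[OF t]]] IJ[OF less_imp_le[OF t]]]
          Bochner_Integration.integral_add[OF IH[OF t] integrable_mult_right[OF IL[OF t]]] integral_mult_right_zero)
  finally show ?thesis .
qed



lemma lb_to_hk:
  fixes f :: "real \<Rightarrow> real"
  assumes i: "integrable lborel (\<lambda>u. indicator {0<..} u * f u)"
  shows "f absolutely_integrable_on {0<..}" "integral {0<..} f = (LINT u|lborel. indicator {0<..} u * f u)"
proof -
  have s: "set_integrable lborel {0<..} f" using i by (simp add: set_integrable_def)
  show "integral {0<..} f = (LINT u|lborel. indicator {0<..} u * f u)"
    using set_borel_integral_eq_integral(2)[OF s] by (simp add: set_lebesgue_integral_def)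
  have m: "(\<lambda>x. indicator {0<..} x *\<^sub>R f x) \<in> borel_measurable lborel"
    using i by (simp add: borel_measurable_integrable)
  show "f absolutely_integrable_on {0<..}"
    unfolding set_integrable_def using integrable_completion[OF m] s by (simp add: set_integrable_def)
qed

lemma tL: assumes t: "t > 0" shows "t * Lf t = ln t * Gf t - Jf t"
proof -
  define f where "f = (\<lambda>u::real. ln u * exp (-u - t/u) / u\<^sup>2)"
  define h where "h w = (1/t) * (ln t * exp (-w - t/w) - ln w * exp (-w - t/w))" for w :: real
  have S: "{0::real<..} \<in> sets lebesgue" by (intro sets_completionI_sets) simp
  have der: "((\<lambda>w. t/w) has_field_derivative (-t/w\<^sup>2)) (at w within {0<..})" if "w \<in> {0<..}" for w :: real
    using that by (auto intro!: derivative_eq_intros simp: power2_eq_square field_simps)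
  have inj: "inj_on (\<lambda>w. t/w) {0<..}" using t by (auto simp: inj_on_def field_simps)
  have img: "(\<lambda>w. t/w) ` {0<..} = {0<..}"
  proof
    show "(\<lambda>w. t/w) ` {0<..} \<subseteq> {0<..}" using t by auto
    show "{0<..} \<subseteq> (\<lambda>w. t/w) ` {0<..}"
    proof
      fix v :: real assume v: "v \<in> {0<..}"
      then have "v = t / (t/v)" "t/v \<in> {0<..}" using t by auto
      then show "v \<in> (\<lambda>w. t/w) ` {0<..}" by blast
    qed
  qed
  have iL: "integrable lborel (\<lambda>u. indicator {0<..} u * f u)" using IL[OF t] by (simp add: f_def)
  have fint: "f absolutely_integrable_on {0<..}" by (rule lb_to_hk(1)[OF iL])
  have fval: "integral {0<..} f = Lf t" using lb_to_hk(2)[OF iL] unfolding Lf_def f_def by simp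
  have c1: "integral {0<..} (\<lambda>w. \<bar>-t/w\<^sup>2\<bar> * f (t/w)) = Lf t"
    using has_absolute_integral_change_of_variables_1'[OF S der inj, of f "Lf t"] img fint fval by auto
  have c2: "integral {0<..} (\<lambda>w. \<bar>-t/w\<^sup>2\<bar> * f (t/w)) = integral {0<..} h"
  proof (rule integral_cong)
    fix w :: real assume w: "w \<in> {0<..}"
    then have w0: "w > 0" by simp
    have e1: "t / (t/w) = w" using t w0 by simp
    have e2: "ln (t/w) = ln t - ln w" using t w0 by (simp add: ln_div)
    have e3: "- (t/w) - w = -w - t/w" by simp
    show "\<bar>-t/w\<^sup>2\<bar> * f (t/w) = h w"
      unfolding f_def h_def e1 e2 e3 using t w0 by (simp add: field_simps power2_eq_square)
  qed
  have hi: "integrable lborel (\<lambda>u. (1/t) * (ln t * (indicator {0<..} u * exp (-u - t/u)) - indicator {0<..} u * (ln u * exp (-u - t/u))))"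
    by (intro integrable_mult_right Bochner_Integration.integrable_diff IG IJ) (use t in auto)
  have heq: "(\<lambda>u. indicator {0<..} u * h u) = (\<lambda>u. (1/t) * (ln t * (indicator {0<..} u * exp (-u - t/u)) - indicator {0<..} u * (ln u * exp (-u - t/u))))"
    by (auto simp: h_def indicator_def fun_eq_iff)
  have c3: "integral {0<..} h = (LINT u|lborel. indicator {0<..} u * h u)"
    using lb_to_hk(2)[of h] hi heq by simp
  have c4: "(LINT u|lborel. indicator {0<..} u * h u) = (1/t) * (ln t * Gf t - Jf t)"
    unfolding heq Gf_def Jf_def
    by (simp only: integral_mult_right_zero Bochner_Integration.integral_diff[OF integrable_mult_right[OF IG[OF less_imp_le[OF t]]] IJ[OF less_imp_le[OF t]]])
  from c1 c2 c3 c4 have "Lf t = (1/t) * (ln t * Gf t - Jf t)" by simp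
  then show ?thesis using t by (simp add: field_simps)
qed



lemma one_minus_exp_le_sqrt: "(x::real) \<ge> 0 \<Longrightarrow> 1 - exp (-x) \<le> sqrt x"
proof -
  assume x: "x \<ge> 0"
  show ?thesis
  proof (cases "x \<ge> 1")
    case True
    then have "1 \<le> sqrt x" by simp
    moreover have "exp (-x) > 0" by simp
    ultimately show ?thesis by linarith
  next
    case False
    have "1 - exp (-x) \<le> x" using exp_ge_add_one_self[of "-x"] by simp
    also have "x \<le> sqrt x"
    proof -
      have s1: "sqrt x \<le> 1" using False x by simp
      have "x = sqrt x * sqrt x" using x by simp
      also have "\<dots> \<le> sqrt x * 1" using s1 x by (intro mult_left_mono) auto
      finally show ?thesis by simp
    qed
    finally show ?thesis .
  qed
qed

lemma G_bound:
  assumes t: "t > 0"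
  shows "0 \<le> 1 - Gf t" "1 - Gf t \<le> sqrt t * (LINT u|lborel. indicator {0<..} u * (u powr (-1/2) * exp (-u)))"
proof -
  have eq: "1 - Gf t = (LINT u|lborel. indicator {0<..} u * exp (-u) - indicator {0<..} u * exp (-u - t/u))"
    unfolding Gf_def
    by (simp only: Bochner_Integration.integral_diff[OF E0(1) IG[OF less_imp_le[OF t]]] E0(2))
  have pw: "indicator {0<..} u * exp (-u - t/u) \<le> indicator {0<..} u * exp (-u)" for u :: real
  proof (cases "u > 0")
    case True
    then have "t/u \<ge> 0" using t by simp
    then show ?thesis using True by simp
  qed simp
  show "0 \<le> 1 - Gf t" unfolding eq
    by (intro integral_nonneg_AE AE_I2) (use pw in \<open>simp add: algebra_simps\<close>)
  have "(LINT u|lborel. indicator {0<..} u * exp (-u) - indicator {0<..} u * exp (-u - t/u))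
        \<le> (LINT u|lborel. sqrt t * (indicator {0<..} u * (u powr (-1/2) * exp (-u))))"
  proof (rule integral_mono)
    show "integrable lborel (\<lambda>u::real. indicator {0<..} u * exp (-u) - indicator {0<..} u * exp (-u - t/u))"
      by (rule Bochner_Integration.integrable_diff[OF E0(1) IG[OF less_imp_le[OF t]]])
    show "integrable lborel (\<lambda>u::real. sqrt t * (indicator {0<..} u * (u powr (-1/2) * exp (-u))))"
      using Eh by (rule integrable_mult_right)
    fix u :: real
    show "indicator {0<..} u * exp (-u) - indicator {0<..} u * exp (-u - t/u) \<le> sqrt t * (indicator {0<..} u * (u powr (-1/2) * exp (-u)))"
    proof (cases "u > 0")
      case True
      have tu: "t/u \<ge> 0" using t True by simp
      have "1 - exp (-(t/u)) \<le> sqrt (t/u)" by (rule one_minus_exp_le_sqrt[OF tu])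
      also have "sqrt (t/u) = sqrt t * u powr (-1/2)"
      proof -
        have "u powr (-1/2) = u powr (-(1/2))" by simp
        also have "\<dots> = inverse (u powr (1/2))" by (rule powr_minus)
        also have "\<dots> = inverse (sqrt u)" using True by (simp add: powr_half_sqrt)
        finally have pe: "u powr (-1/2) = inverse (sqrt u)" .
        have "sqrt (t/u) = sqrt t / sqrt u" by (rule real_sqrt_divide)
        also have "\<dots> = sqrt t * inverse (sqrt u)" by (rule divide_inverse)
        finally show ?thesis unfolding pe .
      qed
      finally have "exp (-u) * (1 - exp (-(t/u))) \<le> exp (-u) * (sqrt t * u powr (-1/2))"
        by (intro mult_left_mono) auto
      then have "exp (-u) - exp (-u - t/u) \<le> sqrt t * (u powr (-1/2) * exp (-u))"
        by (simp only: exp_split right_diff_distrib mult_1_right mult_ac)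
      then show ?thesis using True by simp
    qed simp
  qed
  then show "1 - Gf t \<le> sqrt t * (LINT u|lborel. indicator {0<..} u * (u powr (-1/2) * exp (-u)))"
    unfolding eq by (simp only: integral_mult_right_zero)
qed

lemma lnG_lim: "((\<lambda>t. ln t * (1 - Gf t)) \<longlongrightarrow> 0) (at_right 0)"
proof (rule Lim_null_comparison)
  define C where "C = (LINT u|lborel. indicator {0<..} u * (u powr (-1/2) * exp (-u::real)))"
  show "eventually (\<lambda>t. norm (ln t * (1 - Gf t)) \<le> C * (\<bar>ln t\<bar> * sqrt t)) (at_right 0)"
  proof (rule eventually_at_rightI[where b=1])
    fix t :: real assume "t \<in> {0<..<1}"
    then have t: "t > 0" by simp
    have "norm (ln t * (1 - Gf t)) = \<bar>ln t\<bar> * (1 - Gf t)" using G_bound(1)[OF t] by (simp add: abs_mult)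
    also have "\<dots> \<le> \<bar>ln t\<bar> * (sqrt t * C)" using G_bound(2)[OF t] unfolding C_def by (intro mult_left_mono) auto
    finally show "norm (ln t * (1 - Gf t)) \<le> C * (\<bar>ln t\<bar> * sqrt t)" by (simp add: algebra_simps)
  qed simp
  have "((\<lambda>t::real. \<bar>ln t\<bar> * sqrt t) \<longlongrightarrow> 0) (at_right 0)" by real_asymp
  then show "((\<lambda>t. C * (\<bar>ln t\<bar> * sqrt t)) \<longlongrightarrow> 0) (at_right 0)"
    using tendsto_mult_right_zero by blast
qed

lemma H_eq: assumes t: "t > 0" shows "Hf t = 2 * Jf t - ln t * Gf t"
  using HLJ[OF t] tL[OF t] by simp

lemma H_lim: "((\<lambda>t. Hf t + ln t - 2 * Digamma 1) \<longlongrightarrow> 0) (at_right 0)"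
proof -
  have ev: "eventually (\<lambda>t. 2 * (Jf t - Jf 0) + ln t * (1 - Gf t) = Hf t + ln t - 2 * Digamma 1) (at_right 0)"
    by (rule eventually_at_rightI[where b=1]) (simp_all add: H_eq J0 algebra_simps)
  have "((\<lambda>t. 2 * (Jf t - Jf 0) + ln t * (1 - Gf t)) \<longlongrightarrow> 2 * (Jf 0 - Jf 0) + 0) (at_right 0)"
    by (intro tendsto_intros J_lim lnG_lim)
  then have "((\<lambda>t. 2 * (Jf t - Jf 0) + ln t * (1 - Gf t)) \<longlongrightarrow> 0) (at_right 0)" by simp
  then show ?thesis using ev by (rule Lim_transform_eventually)
qed

lemma main_lim:
  "((\<lambda>t. (1 - Gf t - t * (2 * Digamma 1 + 1 - ln t)) / t) \<longlongrightarrow> 0) (at_right 0)"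
proof (rule lhopital_right_0[where f'="\<lambda>t. Hf t + ln t - 2 * Digamma 1" and g'="\<lambda>_. 1"])
  define c :: real where "c = 2 * Digamma 1 + 1"
  have a: "((\<lambda>t::real. t) \<longlongrightarrow> 0) (at_right 0)" by (rule tendsto_ident_at)
  have b: "((\<lambda>t::real. t * ln t) \<longlongrightarrow> 0) (at_right 0)" by real_asymp
  have "((\<lambda>t::real. t * c - t * ln t) \<longlongrightarrow> 0 * c - 0) (at_right 0)"
    by (intro tendsto_diff tendsto_mult a b tendsto_const)
  then have l1: "((\<lambda>t::real. t * (c - ln t)) \<longlongrightarrow> 0) (at_right 0)"
    by (simp add: algebra_simps)
  have "((\<lambda>t. 1 - Gf t - t * (c - ln t)) \<longlongrightarrow> 1 - 1 - 0) (at_right 0)"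
    by (intro tendsto_diff tendsto_const G_lim l1)
  then show "((\<lambda>t. 1 - Gf t - t * (2 * Digamma 1 + 1 - ln t)) \<longlongrightarrow> 0) (at_right 0)" by (simp add: c_def)
  show "((\<lambda>t::real. t) \<longlongrightarrow> 0) (at_right 0)" by (rule a)
  show "eventually (\<lambda>t::real. t \<noteq> 0) (at_right 0)"
    by (rule eventually_at_rightI[where b=1]) auto
  show "eventually (\<lambda>t::real. (1::real) \<noteq> 0) (at_right 0)" by simp
  show "eventually (\<lambda>t. ((\<lambda>t. 1 - Gf t - t * (2 * Digamma 1 + 1 - ln t)) has_real_derivative Hf t + ln t - 2 * Digamma 1) (at t)) (at_right 0)"
  proof (rule eventually_at_rightI[where b=1])
    fix t :: real assume "t \<in> {0<..<1}"
    then have t: "t > 0" by simp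
    have d1: "(Gf has_real_derivative - Hf t) (at t)" by (rule DG[OF t])
    have d2: "((\<lambda>t. t * (c - ln t)) has_real_derivative (c - ln t - 1)) (at t)"
      using t by (auto intro!: derivative_eq_intros simp: field_simps)
    have "((\<lambda>t. 1 - Gf t - t * (c - ln t)) has_real_derivative (0 - - Hf t - (c - ln t - 1))) (at t)"
      by (intro DERIV_diff DERIV_const d1 d2)
    then show "((\<lambda>t. 1 - Gf t - t * (2 * Digamma 1 + 1 - ln t)) has_real_derivative Hf t + ln t - 2 * Digamma 1) (at t)"
      by (simp add: c_def algebra_simps)
  qed simp
  show "eventually (\<lambda>t. ((\<lambda>t::real. t) has_real_derivative 1) (at t)) (at_right 0)"
    by (intro always_eventually allI DERIV_ident)
  show "((\<lambda>t. (Hf t + ln t - 2 * Digamma 1) / 1) \<longlongrightarrow> 0) (at_right 0)"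
    using H_lim by simp
qed



lemma gud1: "gamma_unit_density 1 x = indicator {0<..} x * exp (-x)"
  by (simp add: gamma_unit_density_def indicator_def)

lemma exp_int_0c:
  fixes c :: real
  assumes c: "c \<ge> 0"
  shows "(LINT v|lborel. indicator {0<..} v * exp (-v) * indicator {..c} v) = 1 - exp (-c)"
proof -
  have "integral\<^sup>L lborel (\<lambda>x. indicator {0..c} x *\<^sub>R exp (-x)) = (\<lambda>x. - exp (-x)) c - (\<lambda>x. - exp (-x)) 0"
  proof (rule integral_FTC_atLeastAtMost[of 0 c "\<lambda>x. - exp (-x)" "\<lambda>x. exp (-x)"])
    show "0 \<le> c" by fact
    show "((\<lambda>x. - exp (-x)) has_vector_derivative exp (-x)) (at x within {0..c})" for x :: real
      by (auto intro!: derivative_eq_intros simp: has_real_derivative_iff_has_vector_derivative[symmetric])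
    show "continuous_on {0..c} (\<lambda>x::real. exp (-x))" by (intro continuous_intros)
  qed
  moreover have "(LINT v|lborel. indicator {0<..} v * exp (-v) * indicator {..c} v) = integral\<^sup>L lborel (\<lambda>x. indicator {0..c} x *\<^sub>R exp (-x))"
    by (intro integral_cong_AE) (auto intro!: eventually_mono[OF AE_lborel_singleton[of 0]] simp: indicator_def)
  ultimately show ?thesis by simp
qed

lemma cdf1:
  assumes gd: "gd > 0" and y: "y > 0"
  shows "genK_cdf 1 1 gd y = 1 - Gf (y/gd)"
proof -
  have inner: "(LINT v|lborel. gamma_unit_density 1 u * gamma_unit_density 1 v * indicator {..y} (gd * u * v))
      = indicator {0<..} u * exp (-u) - indicator {0<..} u * exp (-u - (y/gd)/u)" for u :: real
  proof (cases "u > 0")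
    case True
    have "(LINT v|lborel. gamma_unit_density 1 u * gamma_unit_density 1 v * indicator {..y} (gd * u * v))
        = (LINT v|lborel. exp (-u) * (indicator {0<..} v * exp (-v) * indicator {..y / (gd * u)} v))"
    proof (intro Bochner_Integration.integral_cong refl)
      fix v :: real
      have "gd * u * v \<le> y \<longleftrightarrow> v \<le> y / (gd * u)" using gd True by (simp add: field_simps mult.commute)
      then have "indicator {..y} (gd * u * v) = (indicator {..y / (gd * u)} v :: real)" by (simp add: indicator_def)
      then show "gamma_unit_density 1 u * gamma_unit_density 1 v * indicator {..y} (gd * u * v)
          = exp (-u) * (indicator {0<..} v * exp (-v) * indicator {..y / (gd * u)} v)"
        using True by (simp add: gud1)
    qed
    also have "\<dots> = exp (-u) * (1 - exp (- (y / (gd * u))))"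
      using exp_int_0c[of "y / (gd * u)"] gd y True by (simp add: integral_mult_right_zero)
    also have "\<dots> = indicator {0<..} u * exp (-u) - indicator {0<..} u * exp (-u - (y/gd)/u)"
    proof -
      have e: "exp (- u - y / (gd * u)) = exp (- u) * exp (- (y / (gd * u)))"
        by (subst exp_add[symmetric]) simp
      show ?thesis using True by (simp add: e algebra_simps)
    qed
    finally show ?thesis .
  next
    case False
    then show ?thesis by (simp add: gud1)
  qed
  have "genK_cdf 1 1 gd y = (LINT u|lborel. indicator {0<..} u * exp (-u) - indicator {0<..} u * exp (-u - (y/gd)/u))"
    unfolding genK_cdf_def inner ..
  also have "\<dots> = 1 - Gf (y/gd)"
  proof -
    have c0: "0 \<le> y/gd" using gd y by simp
    show ?thesis unfolding Gf_def
      by (simp only: Bochner_Integration.integral_diff[OF E0(1) IG[OF c0]] E0(2))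
  qed
  finally show ?thesis .
qed



lemma P2:
  fixes lam gd x0 :: real
  assumes lam: "lam > 0" and gd: "gd > 0" and x0: "lam - 1 + lam * x0 > 0"
  shows "deriv (deriv (\<lambda>x. genK_cdf 1 1 gd (lam - 1 + lam * x))) x0 = - ((lam/gd)^2 * Kf ((lam - 1 + lam * x0)/gd))"
proof -
  define P where "P = (\<lambda>x. genK_cdf 1 1 gd (lam - 1 + lam * x))"
  define w where "w = (\<lambda>x. (lam - 1 + lam * x) / gd)"
  define U where "U = {x. 0 < lam - 1 + lam * x}"
  have oU: "open U" unfolding U_def by (intro open_Collect_less continuous_intros)
  have x0U: "x0 \<in> U" using x0 by (simp add: U_def)
  have wpos: "w x > 0" if "x \<in> U" for x using gd that by (simp add: U_def w_def)
  have dw: "(w has_real_derivative lam/gd) (at x)" for x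
    unfolding w_def using gd by (auto intro!: derivative_eq_intros simp: field_simps)
  have PQ: "1 - Gf (w x) = P x" if "x \<in> U" for x using cdf1[OF gd] that unfolding P_def w_def U_def by simp
  have dP: "(P has_real_derivative lam/gd * Hf (w x)) (at x)" if xU: "x \<in> U" for x
  proof -
    have "((\<lambda>x. 1 - Gf (w x)) has_real_derivative (0 - (- Hf (w x) * (lam/gd)))) (at x)"
      by (intro DERIV_diff DERIV_const DERIV_chain2[OF DG[OF wpos[OF xU]] dw])
    then have "((\<lambda>x. 1 - Gf (w x)) has_real_derivative lam/gd * Hf (w x)) (at x)" by (simp add: mult_ac)
    then show ?thesis by (rule has_field_derivative_transform_within_open[OF _ oU xU]) (rule PQ)
  qed
  have dP': "deriv P x = lam/gd * Hf (w x)" if "x \<in> U" for x using dP[OF that] DERIV_imp_deriv by blast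
  have d2: "((\<lambda>x. lam/gd * Hf (w x)) has_real_derivative lam/gd * (- Kf (w x0) * (lam/gd))) (at x0)"
    by (intro DERIV_cmult DERIV_chain2[OF DH[OF wpos[OF x0U]] dw])
  have "(deriv P has_real_derivative lam/gd * (- Kf (w x0) * (lam/gd))) (at x0)"
    by (rule has_field_derivative_transform_within_open[OF d2 oU x0U]) (simp add: dP')
  then have "deriv (deriv P) x0 = lam/gd * (- Kf (w x0) * (lam/gd))" by (rule DERIV_imp_deriv)
  then show ?thesis unfolding P_def w_def by (simp add: power2_eq_square algebra_simps)
qed

lemma gud_moment:
  fixes k :: real and j :: nat
  assumes k: "k > 0"
  shows "integrable lborel (\<lambda>u. gamma_unit_density k u * u ^ j)"
    and "(LINT u|lborel. gamma_unit_density k u * u ^ j) = Gamma (k + j) / (Gamma k * k ^ j)"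
proof -
  define g where "g = (\<lambda>v::real. indicator {0<..} v * (v powr (k + j - 1) * exp (-v)))"
  define C where "C = k powr k / (Gamma k * k powr (k + j - 1))"
  have p: "k + real j > 0" using k by simp
  have gi: "integrable lborel g" unfolding g_def by (rule gamma_int(1)[OF p])
  have gv: "(LINT v|lborel. g v) = Gamma (k + j)" unfolding g_def by (rule gamma_int(2)[OF p])
  have pt: "gamma_unit_density k u * u ^ j = C * g (0 + k * u)" for u
  proof (cases "u > 0")
    case True
    have "(k * u) powr (k + j - 1) = k powr (k + j - 1) * u powr (k + j - 1)"
      using k True by (simp add: powr_mult)
    moreover have "u powr (k + j - 1) = u powr (k - 1) * u ^ j"
      using True by (simp add: powr_add[symmetric] powr_realpow[symmetric] algebra_simps)
    moreover have "k powr (k + j - 1) > 0" using k by simp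
    moreover have "Gamma k > 0" using k by (rule Gamma_real_pos)
    ultimately show ?thesis using True k
      by (simp add: gamma_unit_density_def g_def C_def field_simps)
  next
    case False
    then have "k * u \<le> 0" using k by (simp add: mult_nonneg_nonpos)
    then show ?thesis using False by (simp add: gamma_unit_density_def g_def)
  qed
  have gi2: "integrable lborel (\<lambda>u. g (0 + k * u))"
    using lborel_integrable_real_affine[OF gi, of k 0] k by simp
  show "integrable lborel (\<lambda>u. gamma_unit_density k u * u ^ j)"
    unfolding pt by (rule integrable_mult_right[OF gi2])
  have aff: "(LINT v|lborel. g v) = \<bar>k\<bar> * (LINT u|lborel. g (0 + k * u))"
    using lborel_integral_real_affine[of k g 0] k by simp
  have "(LINT u|lborel. gamma_unit_density k u * u ^ j) = C * (LINT u|lborel. g (0 + k * u))"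
    unfolding pt by (rule integral_mult_right_zero)
  also have "\<dots> = C * Gamma (k + j) / k" using aff gv k by simp
  also have "\<dots> = Gamma (k + j) / (Gamma k * k ^ j)"
  proof -
    have e1: "k powr (k + j - 1) * k = k powr k * k ^ j"
    proof -
      have "k powr (k + j - 1) * k = k powr (k + j - 1) * k powr 1" using k by simp
      also have "\<dots> = k powr ((k + j - 1) + 1)" by (rule powr_add[symmetric])
      also have "\<dots> = k powr (k + j)" by simp
      also have "\<dots> = k powr k * k powr (real j)" by (rule powr_add)
      also have "\<dots> = k powr k * k ^ j" using k by (simp add: powr_realpow)
      finally show ?thesis .
    qed
    have gne: "Gamma k \<noteq> 0" using Gamma_real_pos[OF k] by simp
    have pk: "k powr k \<noteq> 0" using k by simp
    have kj: "k ^ j \<noteq> 0" using k by simp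
    have den: "Gamma k * k powr (k + j - 1) * k = Gamma k * k ^ j * k powr k"
      using e1 by (simp add: algebra_simps)
    have "C * Gamma (k + j) / k = k powr k * Gamma (k + j) / (Gamma k * k powr (k + j - 1) * k)"
      unfolding C_def by simp
    also have "\<dots> = k powr k * Gamma (k + j) / (Gamma k * k ^ j * k powr k)" unfolding den ..
    also have "\<dots> = Gamma (k + j) / (Gamma k * k ^ j)" using pk by simp
    finally show ?thesis .
  qed
  finally show "(LINT u|lborel. gamma_unit_density k u * u ^ j) = Gamma (k + j) / (Gamma k * k ^ j)" .
qed

lemma moments:
  fixes k :: real assumes k: "k > 0"
  shows "(LINT u|lborel. gamma_unit_density k u * u ^ 0) = 1"
    "(LINT u|lborel. gamma_unit_density k u * u ^ 1) = 1"
    "(LINT u|lborel. gamma_unit_density k u * u ^ 2) = (k + 1) / k"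
proof -
  have nk: "k \<notin> \<int>\<^sub>\<le>\<^sub>0" using k nonpos_Ints_nonpos by force
  have nk1: "k + 1 \<notin> \<int>\<^sub>\<le>\<^sub>0" using k nonpos_Ints_nonpos by force
  have g0: "Gamma k > 0" using k by (rule Gamma_real_pos)
  have g1: "Gamma (k + 1) = k * Gamma k" by (rule Gamma_plus1[OF nk])
  have g2: "Gamma (k + 2) = (k + 1) * (k * Gamma k)"
    using Gamma_plus1[OF nk1] g1 by (simp add: add.assoc)
  show "(LINT u|lborel. gamma_unit_density k u * u ^ 0) = 1"
    using gud_moment(2)[OF k, of 0] g0 by simp
  show "(LINT u|lborel. gamma_unit_density k u * u ^ 1) = 1"
    using gud_moment(2)[OF k, of 1] g0 g1 k by simp
  show "(LINT u|lborel. gamma_unit_density k u * u ^ 2) = (k + 1) / k"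
  proof -
    have "(LINT u|lborel. gamma_unit_density k u * u ^ 2) = Gamma (k + 2) / (Gamma k * k ^ 2)"
      using gud_moment(2)[OF k, of 2] by simp
    also have "\<dots> = (k + 1) / k"
    proof -
      have gne: "Gamma k \<noteq> 0" using g0 by simp
      show ?thesis unfolding g2 using gne k by (simp add: field_simps power2_eq_square)
    qed
    finally show ?thesis .
  qed
qed

lemma var_eq:
  fixes k m g :: real assumes k: "k > 0" and m: "m > 0"
  shows "genK_var k m g = g\<^sup>2 * ((k + 1) * (m + 1) / (k * m) - 1)"
proof -
  let ?d = "gamma_unit_density"
  have inner: "(LINT v|lborel. ?d k u * ?d m v * (g * u * v - g)\<^sup>2)
     = (g\<^sup>2 * ((m + 1) / m)) * (?d k u * u ^ 2) - (2 * g\<^sup>2) * (?d k u * u ^ 1) + g\<^sup>2 * (?d k u * u ^ 0)" for u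
  proof -
    have "(LINT v|lborel. ?d k u * ?d m v * (g * u * v - g)\<^sup>2)
       = (LINT v|lborel. (?d k u * g\<^sup>2 * u\<^sup>2) * (?d m v * v ^ 2) - (2 * ?d k u * g\<^sup>2 * u) * (?d m v * v ^ 1) + (?d k u * g\<^sup>2) * (?d m v * v ^ 0))"
      by (intro Bochner_Integration.integral_cong refl) (simp add: power2_eq_square algebra_simps)
    also have "\<dots> = (?d k u * g\<^sup>2 * u\<^sup>2) * ((m + 1) / m) - (2 * ?d k u * g\<^sup>2 * u) * 1 + (?d k u * g\<^sup>2) * 1"
      by (simp only: Bochner_Integration.integral_add[OF Bochner_Integration.integrable_diff[OF integrable_mult_right[OF gud_moment(1)[OF m]] integrable_mult_right[OF gud_moment(1)[OF m]]] integrable_mult_right[OF gud_moment(1)[OF m]]]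
          Bochner_Integration.integral_diff[OF integrable_mult_right[OF gud_moment(1)[OF m]] integrable_mult_right[OF gud_moment(1)[OF m]]]
          integral_mult_right_zero moments[OF m])
    finally show ?thesis by (simp add: power2_eq_square algebra_simps)
  qed
  have "genK_var k m g = (LINT u|lborel. (g\<^sup>2 * ((m + 1) / m)) * (?d k u * u ^ 2) - (2 * g\<^sup>2) * (?d k u * u ^ 1) + g\<^sup>2 * (?d k u * u ^ 0))"
    unfolding genK_var_def inner ..
  also have "\<dots> = (g\<^sup>2 * ((m + 1) / m)) * ((k + 1) / k) - (2 * g\<^sup>2) * 1 + g\<^sup>2 * 1"
    by (simp only: Bochner_Integration.integral_add[OF Bochner_Integration.integrable_diff[OF integrable_mult_right[OF gud_moment(1)[OF k]] integrable_mult_right[OF gud_moment(1)[OF k]]] integrable_mult_right[OF gud_moment(1)[OF k]]]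
          Bochner_Integration.integral_diff[OF integrable_mult_right[OF gud_moment(1)[OF k]] integrable_mult_right[OF gud_moment(1)[OF k]]]
          integral_mult_right_zero moments[OF k])
  also have "\<dots> = g\<^sup>2 * ((k + 1) * (m + 1) / (k * m) - 1)" using k m by (simp add: field_simps)
  finally show ?thesis .
qed



theorem mainTheorem7:
  fixes Rs ke me ge :: real
  assumes "Rs > 0" and "ke > 0" and "me > 0" and "ge > 0"
  defines "lam \<equiv> 2 powr Rs"
  defines "a \<equiv> lam - 1 + lam * ge"
  shows "(\<lambda>gd. P_sop_approx Rs ke me ge gd
            - inverse gd * ((Digamma 1 + Digamma 2 - ln (a / gd)) / inverse a
                 - ge\<^sup>2 * lam\<^sup>2 * ((ke + 1) * (me + 1) / (ke * me) - 1) / (2 * a)))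
         \<in> o[at_top](\<lambda>gd. inverse gd)"
proof -
  note Rs = assms(1) and ke = assms(2) and me = assms(3) and ge = assms(4)
  have lam1: "lam > 1" unfolding lam_def using Rs
    by (metis powr_less_mono powr_zero_eq_one one_less_numeral_iff semiring_norm(76) zero_neq_numeral)
  have a0: "a > 0" unfolding a_def using lam1 ge by (simp add: add_pos_nonneg)
  define V where "V = ge\<^sup>2 * ((ke + 1) * (me + 1) / (ke * me) - 1)"
  have Veq: "genK_var ke me ge = V" unfolding V_def by (rule var_eq[OF ke me])
  define D where "D = Digamma (1::real)"
  have D2: "Digamma (2::real) = D + 1"
    using Digamma_plus1[of "1::real"] unfolding D_def by simp
  define c2 where "c2 = V * lam\<^sup>2 / (2 * a)"
  define f0 where "f0 = (\<lambda>t. 1 - Gf t - t * (2 * Digamma 1 + 1 - ln t))"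
  define E where "E = (\<lambda>gd. P_sop_approx Rs ke me ge gd
            - inverse gd * ((Digamma 1 + Digamma 2 - ln (a / gd)) / inverse a
                 - ge\<^sup>2 * lam\<^sup>2 * ((ke + 1) * (me + 1) / (ke * me) - 1) / (2 * a)))"
  have pt: "E gd / inverse gd = a * (f0 (a / gd) / (a / gd)) + c2 * (1 - Gf (a / gd))" if gd: "gd > 0" for gd
  proof -
    define t where "t = a / gd"
    have t0: "t > 0" unfolding t_def using a0 gd by simp
    have P1: "P_sop_approx Rs ke me ge gd = genK_cdf 1 1 gd a + genK_var ke me ge / 2 * deriv (deriv (\<lambda>x. genK_cdf 1 1 gd (lam - 1 + lam * x))) ge"
      unfolding P_sop_approx_def Let_def lam_def a_def by simp
    have c1: "genK_cdf 1 1 gd a = 1 - Gf t" unfolding t_def by (rule cdf1[OF gd a0])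
    have dd: "deriv (deriv (\<lambda>x. genK_cdf 1 1 gd (lam - 1 + lam * x))) ge = - ((lam/gd)^2 * Kf t)"
      unfolding t_def a_def by (rule P2) (use lam1 gd a0 in \<open>auto simp: a_def\<close>)
    have kt: "Kf t = Gf t / t" using tK[OF t0] t0 by (simp add: field_simps)
    have Ps: "P_sop_approx Rs ke me ge gd = 1 - Gf t - V / 2 * ((lam/gd)^2 * (Gf t / t))"
      unfolding P1 c1 dd Veq kt by simp
    have gdt: "gd = a / t" unfolding t_def using gd a0 by simp
    have "E gd = f0 t + c2 * (1 / gd) * (1 - Gf t)"
      unfolding E_def Ps f0_def c2_def V_def D2 D_def[symmetric] t_def[symmetric]
      using gd a0 t0 ke me unfolding t_def
      by (simp add: field_simps power2_eq_square)
    then show ?thesis using gd a0 t0 unfolding t_def by (simp add: field_simps)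
  qed
  have lim_t: "filterlim (\<lambda>gd. a / gd) (at_right 0) at_top" using a0 by real_asymp
  have l1: "((\<lambda>gd. f0 (a / gd) / (a / gd)) \<longlongrightarrow> 0) at_top"
    using filterlim_compose[OF main_lim lim_t] unfolding f0_def by simp
  have l2: "((\<lambda>gd. Gf (a / gd)) \<longlongrightarrow> 1) at_top"
    using filterlim_compose[OF G_lim lim_t] by simp
  have "((\<lambda>gd. a * (f0 (a / gd) / (a / gd)) + c2 * (1 - Gf (a / gd))) \<longlongrightarrow> a * 0 + c2 * (1 - 1)) at_top"
    by (intro tendsto_intros l1 l2)
  then have l3: "((\<lambda>gd. a * (f0 (a / gd) / (a / gd)) + c2 * (1 - Gf (a / gd))) \<longlongrightarrow> 0) at_top" by simp
  have ev: "eventually (\<lambda>gd. a * (f0 (a / gd) / (a / gd)) + c2 * (1 - Gf (a / gd)) = E gd / inverse gd) at_top"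
    using eventually_gt_at_top[of 0] by eventually_elim (simp add: pt)
  have "((\<lambda>gd. E gd / inverse gd) \<longlongrightarrow> 0) at_top" using Lim_transform_eventually[OF l3 ev] .
  moreover have "eventually (\<lambda>gd::real. inverse gd \<noteq> 0) at_top"
    using eventually_gt_at_top[of 0] by eventually_elim simp
  ultimately have "E \<in> o[at_top](\<lambda>gd. inverse gd)" by (rule smalloI_tendsto)
  then show ?thesis unfolding E_def .
qed

end
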